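(* Let $S\subset\mathbb{R}^p$ be a compact set with $\mathrm{cl}(\mathrm{int}(S))=S$ and let $\mu_S$ be the uniform probability measure on $S$. Let $\delta>0$ and $\mathbf{x}\in S$ with $\mathrm{dist}(\mathbf{x},\partial S)\ge\delta$. Then for every $d\in\mathbb{N}$, \[s(d)\,\Lambda_{\mu_S,d}(\mathbf{x})\ge\frac{\delta^p\,\omega_p}{\lambda(S)}\,\frac{(d+1)(d+2)(d+3)}{(d+p+1)(d+p+2)(2d+p+6)}.\]
   Context: $\lambda$ is Lebesgue measure, $\mu_S=\lambda_S/\lambda(S)$ with $\lambda_S$ the restriction of $\lambda$ to $S$; $\partial S$ is the topological boundary of $S$; $s(d)=\binom{p+d}{d}$; $\omega_p=\frac{2\pi^{(p+1)/2}}{\Gamma((p+1)/2)}$. For a finite Borel measure $\nu$ with finite moments, $\Lambda_{\nu,d}(\xi)=\min\{\int P^2\,d\nu: P\in\mathbb{R}[X]_d,\ P(\xi)=1\}$, where $\mathbb{R}[X]_d$ is the space of real polynomials in $p$ variables of total degree at most $d$. *)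

theory Defs
  imports "HOL-Analysis.Analysis"
begin

definition multi_idx :: "nat \<Rightarrow> ('n::finite \<Rightarrow> nat) set" where
  "multi_idx d = {\<alpha>. (\<Sum>i\<in>UNIV. \<alpha> i) \<le> d}"

definition polys_deg :: "nat \<Rightarrow> (real^'n::finite \<Rightarrow> real) set" where
  "polys_deg d = {P. \<exists>c :: ('n \<Rightarrow> nat) \<Rightarrow> real.
      P = (\<lambda>x. \<Sum>\<alpha>\<in>multi_idx d. c \<alpha> * (\<Prod>i\<in>UNIV. (x $ i) ^ \<alpha> i))}"

text \<open>Christoffel function of a measure nu at xi (the minimum is written as an infimum).\<close>
definition christoffel :: "(real^'n::finite) measure \<Rightarrow> nat \<Rightarrow> real^'n \<Rightarrow> real" where
  "christoffel \<nu> d \<xi> = Inf {(\<integral>x. (P x)^2 \<partial>\<nu>) | P. P \<in> polys_deg d \<and> P \<xi> = 1}"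

definition omega :: "nat \<Rightarrow> real" where
  "omega p = 2 * pi powr ((real p + 1) / 2) / Gamma ((real p + 1) / 2)"

end

theory Submission
  imports Defs "HOL-Computational_Algebra.Polynomial"
begin


definition Dd :: "nat \<Rightarrow> (nat \<Rightarrow> real) \<Rightarrow> real" where
  "Dd m f = (\<Sum>j\<le>m. (-1)^j * real (m choose j) * f j)"

lemma Dd_Suc: "Dd (Suc m) f = Dd m f - Dd m (\<lambda>j. f (Suc j))"
proof -
  have A: "Dd (Suc m) f = f 0 + (\<Sum>i\<le>m. (-1)^(Suc i) * real (Suc m choose Suc i) * f (Suc i))"
    unfolding Dd_def by (subst sum.atMost_Suc_shift) simp
  have B: "(\<Sum>i\<le>m. (-1)^(Suc i) * real (Suc m choose Suc i) * f (Suc i)) =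
     (\<Sum>i\<le>m. (-1)^(Suc i) * real (m choose Suc i) * f (Suc i)) - (\<Sum>i\<le>m. (-1)^i * real (m choose i) * f (Suc i))"
    unfolding sum_subtractf[symmetric] by (rule sum.cong) (simp_all add: binomial_Suc_Suc algebra_simps)
  have C: "Dd m f = (\<Sum>j\<le>Suc m. (-1)^j * real (m choose j) * f j)"
    unfolding Dd_def by simp
  also have "\<dots> = f 0 + (\<Sum>i\<le>m. (-1)^(Suc i) * real (m choose Suc i) * f (Suc i))"
    by (subst sum.atMost_Suc_shift) simp
  finally show ?thesis using A B unfolding Dd_def by simp
qed

lemma Dd_diff: "Dd m (\<lambda>j. f j - g j) = Dd m f - Dd m g"
  unfolding Dd_def by (simp add: sum_subtractf[symmetric] algebra_simps)

lemma Dd_cmult: "Dd m (\<lambda>j. c * f j) = c * Dd m f"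
  unfolding Dd_def by (simp add: sum_distrib_left algebra_simps)

lemma Dd_add: "Dd m (\<lambda>j. f j + g j) = Dd m f + Dd m g"
  unfolding Dd_def by (simp add: sum.distrib algebra_simps)

lemma degree_shift_diff:
  fixes P :: "real poly"
  assumes "degree P > 0"
  shows "degree (P - pcompose P [:1,1:]) < degree P"
proof -
  let ?Q = "pcompose P [:1,1:]"
  have dq: "degree ?Q = degree P" by (simp add: degree_pcompose)
  have lc: "lead_coeff ?Q = lead_coeff P" by (simp add: lead_coeff_comp)
  have "coeff (P - ?Q) k = 0" if "k \<ge> degree P" for k
  proof (cases "k = degree P")
    case True then show ?thesis using lc dq by simp
  next
    case False then have "k > degree P" using that by simp
    then show ?thesis using dq by (simp add: coeff_eq_0)
  qed
  then have "degree (P - ?Q) \<le> degree P - 1"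
    using assms by (intro degree_le) auto
  then show ?thesis using assms by simp
qed

lemma Dd_poly: "degree (P::real poly) < m \<Longrightarrow> Dd m (\<lambda>j. poly P (real j)) = 0"
proof (induction m arbitrary: P)
  case 0 then show ?case by simp
next
  case (Suc m)
  show ?case
  proof (cases "degree P = 0")
    case True
    then obtain c where P: "P = [:c:]" by (metis degree_eq_zeroE)
    have "Dd (Suc m) (\<lambda>j. poly P (real j)) = c * Dd (Suc m) (\<lambda>j. 1)"
      using Dd_cmult[of "Suc m" c "\<lambda>j. 1"] by (simp add: P)
    also have "Dd (Suc m) (\<lambda>j. 1) = 0" using Dd_Suc[of m "\<lambda>j. 1"] by simp
    finally show ?thesis by simp
  next
    case False
    let ?Q = "P - pcompose P [:1,1:]"
    have dQ: "degree ?Q < m" using degree_shift_diff[of P] False Suc.prems by simp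
    have "Dd (Suc m) (\<lambda>j. poly P (real j)) = Dd m (\<lambda>j. poly P (real j) - poly P (real (Suc j)))"
      by (simp add: Dd_Suc Dd_diff)
    also have "\<dots> = Dd m (\<lambda>j. poly ?Q (real j))"
      by (simp add: poly_pcompose add.commute)
    also have "\<dots> = 0" using Suc.IH dQ by blast
    finally show ?thesis .
  qed
qed

lemma Dd_inv: "z > 0 \<Longrightarrow> Dd m (\<lambda>j. 1 / (z + real j)) = fact m / pochhammer z (Suc m)"
proof (induction m arbitrary: z)
  case 0 then show ?case by (simp add: Dd_def)
next
  case (Suc m)
  have p1: "pochhammer z (Suc (Suc m)) = pochhammer z (Suc m) * (z + real (Suc m))"
    by (simp add: pochhammer_Suc)
  have p2: "pochhammer z (Suc (Suc m)) = z * pochhammer (z+1) (Suc m)"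
    by (simp add: pochhammer_rec)
  have nz1: "pochhammer z (Suc m) \<noteq> 0" using Suc.prems by (simp add: pochhammer_eq_0_iff)
  have nz2: "pochhammer (z+1) (Suc m) \<noteq> 0" using Suc.prems
    by (metis add_pos_pos less_numeral_extra(1) pochhammer_pos less_irrefl)
  have "Dd (Suc m) (\<lambda>j. 1 / (z + real j)) = fact m / pochhammer z (Suc m) - fact m / pochhammer (z+1) (Suc m)"
    using Suc.IH[of z] Suc.IH[of "z+1"] Suc.prems by (simp add: Dd_Suc add_ac)
  also have "\<dots> = fact m * (z + real (Suc m)) / pochhammer z (Suc (Suc m)) - fact m * z / pochhammer z (Suc (Suc m))"
  proof -
    have e1: "fact m / pochhammer z (Suc m) = fact m * (z + real (Suc m)) / pochhammer z (Suc (Suc m))"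
    proof -
      have "z + real (Suc m) \<noteq> 0" using Suc.prems by simp
      then show ?thesis unfolding p1 using nz1 by (simp add: divide_simps)
    qed
    have e2: "fact m / pochhammer (z+1) (Suc m) = fact m * z / pochhammer z (Suc (Suc m))"
      unfolding p2 using Suc.prems by simp
    show ?thesis using e1 e2 by simp
  qed
  also have "\<dots> = fact (Suc m) / pochhammer z (Suc (Suc m))"
    by (simp add: diff_divide_distrib[symmetric] algebra_simps)
  finally show ?case .
qed

lemma Dd_poly_frac:
  fixes R :: "real poly"
  assumes "degree R \<le> m" "z > 0"
  shows "Dd m (\<lambda>j. poly R (real j) / (z + real j)) = fact m * poly R (-z) / pochhammer z (Suc m)"
proof -
  define S where "S = synthetic_div R (-z)"
  have eq: "[:z, 1:] * S + [:poly R (-z):] = R"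
    using synthetic_div_correct'[of "-z" R] by (simp add: S_def)
  have pt: "poly R (real j) / (z + real j) = poly S (real j) + poly R (-z) * (1 / (z + real j))" for j
  proof -
    have "poly R (real j) = (z + real j) * poly S (real j) + poly R (-z)"
      by (subst eq[symmetric]) (simp add: algebra_simps)
    moreover have "z + real j > 0" using assms by simp
    ultimately show ?thesis by (simp add: field_simps)
  qed
  have DS: "Dd m (\<lambda>j. poly S (real j)) = 0"
  proof (cases "m = 0")
    case True
    then have "degree R = 0" using assms by simp
    then have "S = 0" by (simp add: S_def synthetic_div_eq_0_iff)
    then show ?thesis by (simp add: Dd_def)
  next
    case False
    have "degree S < m" using assms False by (simp add: S_def degree_synthetic_div)
    then show ?thesis by (rule Dd_poly)
  qed
  show ?thesis
    unfolding pt Dd_add Dd_cmult DS using Dd_inv[OF assms(2)] by simp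
qed

definition hc :: "real \<Rightarrow> nat \<Rightarrow> nat \<Rightarrow> real" where
  "hc q m j = (-1)^j * real (m choose j) * pochhammer (q+1) m * pochhammer (q + real j + 1) m / (fact m)^2"

lemma hc_0: "hc q m 0 = (pochhammer (q+1) m / fact m)^2"
  by (simp add: hc_def power2_eq_square)

lemma kernel_eq:
  assumes q: "q > 0" and i: "i \<le> m"
  shows "(\<Sum>j\<le>m. hc q m j * ((q + real i) / (q + real i + real j))) = (if i = 0 then 1 else 0)"
proof -
  define R where "R = (\<Prod>l\<in>{0..<m}. [:q + 1 + real l, 1:])"
  have polyR: "poly R x = (\<Prod>l\<in>{0..<m}. q + 1 + real l + x)" for x
    by (simp add: R_def poly_prod)
  have Rj: "poly R (real j) = pochhammer (q + real j + 1) m" for j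
    by (simp add: polyR pochhammer_prod algebra_simps)
  have dR: "degree R \<le> m"
  proof -
    have "degree R \<le> (\<Sum>l\<in>{0..<m}. degree [:q + 1 + real l, 1:])"
      unfolding R_def using degree_prod_sum_le[of "{0..<m}" "\<lambda>l. [:q + 1 + real l, 1:]"] by (simp add: o_def)
    then show ?thesis by simp
  qed
  have z: "q + real i > 0" using q by simp
  have "(\<Sum>j\<le>m. hc q m j * ((q + real i) / (q + real i + real j))) =
     (q + real i) * pochhammer (q+1) m / (fact m)^2 * Dd m (\<lambda>j. poly R (real j) / (q + real i + real j))"
    unfolding Dd_def Rj hc_def by (simp add: sum_distrib_left algebra_simps)
  also have "\<dots> = (q + real i) * pochhammer (q+1) m / (fact m)^2 * (fact m * poly R (-(q + real i)) / pochhammer (q + real i) (Suc m))"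
    using Dd_poly_frac[OF dR z] by simp
  also have "\<dots> = (if i = 0 then 1 else 0)"
  proof (cases "i = 0")
    case True
    have "poly R (-q) = fact m"
      by (simp add: polyR fact_prod_Suc prod.atLeast0_lessThan_Suc_shift[symmetric] pochhammer_fact)
    moreover have "pochhammer q (Suc m) = q * pochhammer (q+1) m" by (simp add: pochhammer_rec)
    moreover have "pochhammer (q+1) m \<noteq> 0" using q by (metis add_pos_pos less_numeral_extra(1) pochhammer_pos less_irrefl)
    ultimately show ?thesis using True q by (simp add: power2_eq_square)
  next
    case False
    have "poly R (-(q + real i)) = (\<Prod>l\<in>{0..<m}. 1 + real l - real i)"
      by (simp add: polyR algebra_simps)
    also have "\<dots> = 0"
      using False i by (intro prod_zero) (auto intro!: bexI[of _ "i - 1"])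
    finally show ?thesis using False by simp
  qed
  finally show ?thesis .
qed



definition mon :: "('n::finite \<Rightarrow> nat) \<Rightarrow> real^'n \<Rightarrow> real" where
  "mon \<alpha> z = (\<Prod>i\<in>UNIV. (z $ i) ^ \<alpha> i)"

definition mdeg :: "('n::finite \<Rightarrow> nat) \<Rightarrow> nat" where
  "mdeg \<alpha> = (\<Sum>i\<in>UNIV. \<alpha> i)"

lemma continuous_on_mon [continuous_intros]: "continuous_on S (mon \<alpha>)"
  unfolding mon_def by (intro continuous_intros)

lemma continuous_on_mon' [continuous_intros]: "continuous_on S f \<Longrightarrow> continuous_on S (\<lambda>x. mon \<alpha> (f x))"
  unfolding mon_def by (intro continuous_intros)

lemma mon_scale: "mon \<alpha> (c *\<^sub>R z) = c ^ mdeg \<alpha> * mon \<alpha> z"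
  by (simp add: mon_def mdeg_def power_mult_distrib prod.distrib power_sum)

lemma mon_borel [measurable]: "mon \<alpha> \<in> borel_measurable borel"
  by (intro borel_measurable_continuous_onI continuous_on_mon)

lemma ind_mult_borel [measurable]:
  fixes f :: "'a::euclidean_space \<Rightarrow> real"
  assumes [measurable]: "f \<in> borel_measurable borel"
  shows "(\<lambda>x. indicator (cball c r) x * f x) \<in> borel_measurable borel"
proof -
  have [measurable]: "cball c r \<in> sets borel" by (simp add: borel_closed)
  show ?thesis by measurable
qed

lemma integral_affine_cart:
  fixes f :: "real^'n::finite \<Rightarrow> real"
  assumes f[measurable]: "f \<in> borel_measurable borel" and c: "c \<noteq> 0"
  shows "integral\<^sup>L lborel f = \<bar>c\<bar> ^ CARD('n) * integral\<^sup>L lborel (\<lambda>x. f (t + c *\<^sub>R x))"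
proof -
  have eq: "(lborel :: (real^'n) measure) = density (distr lborel borel (\<lambda>x. t + c *\<^sub>R x)) (\<lambda>_. \<bar>c\<bar>^DIM(real^'n))"
    using lborel_affine[OF c, of t] .
  have "integral\<^sup>L lborel f = integral\<^sup>L (density (distr lborel borel (\<lambda>x. t + c *\<^sub>R x)) (\<lambda>_. \<bar>c\<bar>^DIM(real^'n))) f"
    by (rule arg_cong[where f="\<lambda>M. integral\<^sup>L M f", OF eq])
  also have "\<dots> = \<bar>c\<bar> ^ CARD('n) * integral\<^sup>L lborel (\<lambda>x. f (t + c *\<^sub>R x))"
    by (simp add: integral_density integral_distr)
  finally show ?thesis .
qed

definition Jm :: "('n::finite \<Rightarrow> nat) \<Rightarrow> real" where
  "Jm \<alpha> = (\<integral>x. indicator (cball 0 1) x * mon \<alpha> x \<partial>lborel)"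

lemma J_scale:
  fixes \<alpha> :: "'n::finite \<Rightarrow> nat"
  assumes s: "s > 0"
  shows "(\<integral>x. indicator (cball (0::real^'n) s) x * mon \<alpha> x \<partial>lborel) = s ^ (mdeg \<alpha> + CARD('n)) * Jm \<alpha>"
proof -
  have ind: "indicator (cball (0::real^'n) s) (s *\<^sub>R z) = (indicator (cball 0 1) z :: real)" for z
    using s by (simp add: indicator_def)
  have "(\<integral>x. indicator (cball (0::real^'n) s) x * mon \<alpha> x \<partial>lborel) =
      \<bar>s\<bar> ^ CARD('n) * (\<integral>z. indicator (cball (0::real^'n) s) (0 + s *\<^sub>R z) * mon \<alpha> (0 + s *\<^sub>R z) \<partial>lborel)"
    using s by (intro integral_affine_cart) auto
  also have "\<dots> = s ^ CARD('n) * (\<integral>z. s ^ mdeg \<alpha> * (indicator (cball 0 1) z * mon \<alpha> z) \<partial>lborel)"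
    using s by (simp add: ind mon_scale mult_ac)
  also have "\<dots> = s ^ (mdeg \<alpha> + CARD('n)) * Jm \<alpha>"
    by (simp add: Jm_def power_add)
  finally show ?thesis .
qed

lemma J_odd:
  fixes \<alpha> :: "'n::finite \<Rightarrow> nat"
  assumes "odd (mdeg \<alpha>)"
  shows "Jm \<alpha> = 0"
proof -
  have ind: "indicator (cball (0::real^'n) 1) ((-1) *\<^sub>R z) = (indicator (cball 0 1) z :: real)" for z
    by (simp add: indicator_def)
  have "Jm \<alpha> = \<bar>-1\<bar> ^ CARD('n) * (\<integral>z. indicator (cball (0::real^'n) 1) (0 + (-1) *\<^sub>R z) * mon \<alpha> (0 + (-1) *\<^sub>R z) \<partial>lborel)"
    unfolding Jm_def by (intro integral_affine_cart) auto
  also have "\<dots> = (\<integral>z. - (indicator (cball 0 1) z * mon \<alpha> z) \<partial>lborel)"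
  proof -
    have m: "mon \<alpha> (- z) = - mon \<alpha> z" for z
      using mon_scale[of \<alpha> "-1" z] assms by simp
    have i: "indicator (cball (0::real^'n) 1) (- z) = (indicator (cball 0 1) z :: real)" for z
      by (simp add: indicator_def)
    show ?thesis by (simp add: m i)
  qed
  also have "\<dots> = - Jm \<alpha>" by (simp add: Jm_def)
  finally show ?thesis by simp
qed

lemma J_zero: "Jm (\<lambda>_::'n::finite. 0) = unit_ball_vol (real CARD('n))"
proof -
  have "Jm (\<lambda>_::'n. 0) = measure lborel (cball (0::real^'n) 1)"
    by (simp add: Jm_def mon_def)
  also have "\<dots> = unit_ball_vol (real CARD('n))"
    by (simp add: measure_def emeasure_cball)
  finally show ?thesis .
qed

lemma mdeg_zero [simp]: "mdeg (\<lambda>_. 0) = 0" by (simp add: mdeg_def)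

lemma integrable_ball:
  fixes f :: "real^'n::finite \<Rightarrow> real"
  assumes "continuous_on (cball c r) f"
  shows "integrable lborel (\<lambda>x. indicator (cball c r) x * f x)"
  using borel_integrable_compact[OF compact_cball assms] by simp

lemma FTC_pow:
  assumes "0 \<le> a" "a \<le> b" "k > 0"
  shows "(\<integral>s. (real k * s ^ (k - 1)) * indicator {a..b} s \<partial>lborel) = b ^ k - a ^ k"
proof -
  have "(\<integral>s. (real k * s ^ (k - 1)) * indicator {a..b} s \<partial>lborel) = (\<lambda>s. s ^ k) b - (\<lambda>s. s ^ k) a"
  proof (rule integral_FTC_Icc_real[OF assms(2)])
    fix x show "((\<lambda>s. s ^ k) has_real_derivative real k * x ^ (k - 1)) (at x)"
      by (rule derivative_eq_intros refl | simp)+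
    show "isCont (\<lambda>s. real k * s ^ (k - 1)) x" by (intro continuous_intros)
  qed
  then show ?thesis by simp
qed

lemma J_radial:
  fixes \<alpha> :: "'n::finite \<Rightarrow> nat"
  defines "N \<equiv> mdeg \<alpha> + CARD('n)"
  shows "(\<integral>x. indicator (cball (0::real^'n) 1) x * mon \<alpha> x * norm x ^ (2*j) \<partial>lborel)
          = real N / (real N + 2 * real j) * Jm \<alpha>"
proof (cases "j = 0")
  case True
  have "N > 0" unfolding N_def by simp
  then show ?thesis using True by (simp add: Jm_def)
next
  case False
  have Npos: "N > 0" unfolding N_def by simp
  define C where "C = cball (0::real^'n) 1"
  define h where "h x s = indicator {0..1} s * indicator (cball (0::real^'n) s) x * (mon \<alpha> x * (2 * real j * s ^ (2*j-1)))" for x s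
  define K where "K = (cball (0::real^'n) 1 \<times> {0..1::real}) \<inter> {z. norm (fst z) \<le> snd z}"
  have cK: "compact K"
    unfolding K_def
    by (intro compact_Int_closed compact_Times compact_cball compact_Icc closed_Collect_le continuous_intros)
  have hK: "case_prod h = (\<lambda>z. indicator K z *\<^sub>R (mon \<alpha> (fst z) * (2 * real j * snd z ^ (2*j-1))))"
    by (auto simp: h_def K_def indicator_def fun_eq_iff)
  have int: "integrable (lborel \<Otimes>\<^sub>M lborel) (case_prod h)"
    unfolding lborel_prod hK
    by (intro borel_integrable_compact cK continuous_intros)
  have Fub: "(\<integral>s. (\<integral>x. h x s \<partial>lborel) \<partial>lborel) = (\<integral>x. (\<integral>s. h x s \<partial>lborel) \<partial>lborel)"
    by (rule lborel_pair.Fubini_integral[OF int])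
  have inner1: "(\<integral>x. h x s \<partial>lborel) = (2 * real j * Jm \<alpha>) * s ^ (2*j - 1 + N) * indicator {0..1} s" for s
  proof -
    have "(\<integral>x. h x s \<partial>lborel) = (indicator {0..1} s * (2 * real j * s ^ (2*j-1))) * (\<integral>x. indicator (cball (0::real^'n) s) x * mon \<alpha> x \<partial>lborel)"
      unfolding h_def by (subst integral_mult_right_zero[symmetric]) (simp add: mult_ac)
    also have "\<dots> = (2 * real j * Jm \<alpha>) * s ^ (2*j - 1 + N) * indicator {0..1} s"
    proof (cases "s > 0")
      case True
      then show ?thesis using J_scale[OF True, of \<alpha>] by (simp add: N_def power_add)
    next
      case False
      then show ?thesis using \<open>j \<noteq> 0\<close> Npos by (auto simp: indicator_def power_0_left)
    qed
    finally show ?thesis .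
  qed
  have lhs: "(\<integral>s. (\<integral>x. h x s \<partial>lborel) \<partial>lborel) = 2 * real j / (2 * real j + real N) * Jm \<alpha>"
  proof -
    have "(\<integral>s. (\<integral>x. h x s \<partial>lborel) \<partial>lborel) = (2 * real j * Jm \<alpha>) / real (2*j + N) * (\<integral>s. (real (2*j+N) * s ^ (2*j + N - 1)) * indicator {0..1} s \<partial>lborel)"
    proof -
      have "(2 * real j * Jm \<alpha>) * s ^ (2*j - 1 + N) * indicator {0..1} s = (2 * real j * Jm \<alpha>) / real (2*j + N) * ((real (2*j+N) * s ^ (2*j + N - 1)) * indicator {0..1} s)" for s :: real
      proof -
        have "2*j - 1 + N = 2*j + N - 1" using \<open>j \<noteq> 0\<close> by simp
        moreover have "real (2*j+N) \<noteq> 0" using Npos by simp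
        ultimately show ?thesis by (simp add: field_simps)
      qed
      then show ?thesis unfolding inner1 by (subst integral_mult_right_zero[symmetric]) simp
    qed
    also have "\<dots> = (2 * real j * Jm \<alpha>) / real (2*j + N)"
      using Npos by (subst FTC_pow) auto
    finally show ?thesis by simp
  qed
  have inner2: "(\<integral>s. h x s \<partial>lborel) = indicator C x * mon \<alpha> x - indicator C x * mon \<alpha> x * norm x ^ (2*j)" for x
  proof (cases "norm x \<le> 1")
    case True
    have "(\<integral>s. h x s \<partial>lborel) = mon \<alpha> x * (\<integral>s. (real (2*j) * s ^ (2*j - 1)) * indicator {norm x..1} s \<partial>lborel)"
    proof -
      have "h x = (\<lambda>s. mon \<alpha> x * ((real (2*j) * s ^ (2*j - 1)) * indicator {norm x..1} s))"
        by (auto simp: h_def indicator_def fun_eq_iff dest: order_trans[OF norm_ge_zero])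
      then show ?thesis by simp
    qed
    also have "\<dots> = mon \<alpha> x * (1 - norm x ^ (2*j))"
      using True \<open>j \<noteq> 0\<close> by (subst FTC_pow) auto
    finally show ?thesis using True by (simp add: C_def algebra_simps)
  next
    case False
    then have "h x s = 0" for s by (auto simp: h_def indicator_def)
    then show ?thesis using False by (simp add: C_def)
  qed
  have i1: "integrable lborel (\<lambda>x. indicator C x * mon \<alpha> x)"
    unfolding C_def by (intro integrable_ball continuous_intros)
  have i2: "integrable lborel (\<lambda>x. indicator C x * (mon \<alpha> x * norm x ^ (2*j)))"
    unfolding C_def by (intro integrable_ball continuous_intros)
  have rhs: "(\<integral>x. (\<integral>s. h x s \<partial>lborel) \<partial>lborel) = Jm \<alpha> - (\<integral>x. indicator C x * mon \<alpha> x * norm x ^ (2*j) \<partial>lborel)"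
    unfolding inner2 using i1 i2 by (simp add: Jm_def C_def mult_ac)
  have "(\<integral>x. indicator C x * mon \<alpha> x * norm x ^ (2*j) \<partial>lborel) = Jm \<alpha> - 2 * real j / (2 * real j + real N) * Jm \<alpha>"
    using Fub lhs rhs by simp
  also have "\<dots> = real N / (real N + 2 * real j) * Jm \<alpha>"
    using Npos by (simp add: field_simps)
  finally show ?thesis by (simp add: C_def)
qed


lemma J_radial0:
  "(\<integral>x. indicator (cball (0::real^'n::finite) 1) x * norm x ^ (2*j) \<partial>lborel)
      = real CARD('n) / (real CARD('n) + 2 * real j) * unit_ball_vol (real CARD('n))"
  using J_radial[of "\<lambda>_::'n. 0" j] by (simp add: mon_def J_zero)

lemma mdeg_eq_0: "mdeg \<alpha> = 0 \<longleftrightarrow> \<alpha> = (\<lambda>_. 0)"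
  by (auto simp: mdeg_def fun_eq_iff)

lemma mon_at_0: "mon \<alpha> (0::real^'n::finite) = (if \<alpha> = (\<lambda>_. 0) then 1 else 0)"
proof (cases "\<alpha> = (\<lambda>_. 0)")
  case True then show ?thesis by (simp add: mon_def)
next
  case False
  then obtain i where "\<alpha> i \<noteq> 0" by auto
  then have "mon \<alpha> (0::real^'n) = 0" unfolding mon_def by (intro prod_zero) (auto intro!: bexI[of _ i])
  then show ?thesis using False by simp
qed

definition vol_n :: "'n::finite itself \<Rightarrow> real" where
  "vol_n _ = unit_ball_vol (real CARD('n))"

definition gk :: "'n::finite itself \<Rightarrow> nat \<Rightarrow> nat \<Rightarrow> real" where
  "gk T m j = hc (real CARD('n) / 2) m j / unit_ball_vol (real CARD('n))"

definition Kf :: "nat \<Rightarrow> real^'n::finite \<Rightarrow> real" where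
  "Kf m z = (\<Sum>j\<le>m. gk TYPE('n) m j * norm z ^ (2*j))"

lemma vol_pos: "unit_ball_vol (real CARD('n::finite)) > 0" by simp

lemma vol_nz: "unit_ball_vol (real CARD('n::finite)) \<noteq> 0" using vol_pos[where 'n='n] by linarith

lemma integral_K_aux:
  fixes f :: "real^'n::finite \<Rightarrow> real"
  assumes "continuous_on (cball 0 1) f"
  shows "(\<integral>z. indicator (cball 0 1) z * f z * Kf m z \<partial>lborel)
     = (\<Sum>j\<le>m. gk TYPE('n) m j * (\<integral>z. indicator (cball 0 1) z * f z * norm z ^ (2*j) \<partial>lborel))"
proof -
  have "(\<integral>z. indicator (cball 0 1) z * f z * Kf m z \<partial>lborel)
     = (\<integral>z. (\<Sum>j\<le>m. gk TYPE('n) m j * (indicator (cball 0 1) z * f z * norm z ^ (2*j))) \<partial>lborel)"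
    by (simp add: Kf_def sum_distrib_left mult_ac)
  also have "\<dots> = (\<Sum>j\<le>m. (\<integral>z. gk TYPE('n) m j * (indicator (cball 0 1) z * f z * norm z ^ (2*j)) \<partial>lborel))"
  proof (rule Bochner_Integration.integral_sum)
    fix j assume "j \<in> {..m}"
    have "integrable lborel (\<lambda>z. indicator (cball 0 1) z * (gk TYPE('n) m j * f z * norm z ^ (2*j)))"
      by (intro integrable_ball continuous_intros assms)
    then show "integrable lborel (\<lambda>z. gk TYPE('n) m j * (indicator (cball 0 1) z * f z * norm z ^ (2*j)))"
      by (simp add: mult_ac)
  qed
  finally show ?thesis by simp
qed

lemma kernel_mon:
  fixes \<alpha> :: "'n::finite \<Rightarrow> nat"
  assumes "mdeg \<alpha> \<le> d"
  shows "(\<integral>z. indicator (cball 0 1) z * mon \<alpha> z * Kf (d div 2) z \<partial>lborel) = (if \<alpha> = (\<lambda>_. 0) then 1 else 0)"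
proof -
  let ?m = "d div 2" and ?p = "real CARD('n)" and ?q = "real CARD('n) / 2"
  have "(\<integral>z. indicator (cball 0 1) z * mon \<alpha> z * Kf ?m z \<partial>lborel)
     = (\<Sum>j\<le>?m. gk TYPE('n) ?m j * (real (mdeg \<alpha> + CARD('n)) / (real (mdeg \<alpha> + CARD('n)) + 2 * real j) * Jm \<alpha>))"
    by (simp add: integral_K_aux continuous_on_mon J_radial)
  also have "\<dots> = (if \<alpha> = (\<lambda>_. 0) then 1 else 0)"
  proof (cases "even (mdeg \<alpha>)")
    case False
    then have "Jm \<alpha> = 0" by (simp add: J_odd)
    moreover have "\<alpha> \<noteq> (\<lambda>_. 0)" using False by auto
    ultimately show ?thesis by simp
  next
    case True
    then obtain i where i: "mdeg \<alpha> = 2 * i" by auto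
    have im: "i \<le> ?m" using i assms by simp
    have r: "real (mdeg \<alpha> + CARD('n)) / (real (mdeg \<alpha> + CARD('n)) + 2 * real j) = (?q + real i) / (?q + real i + real j)" for j
    proof -
      have "real CARD('n) > 0" by simp
      then show ?thesis by (simp add: i divide_simps) (simp add: algebra_simps)
    qed
    have "(\<Sum>j\<le>?m. gk TYPE('n) ?m j * (real (mdeg \<alpha> + CARD('n)) / (real (mdeg \<alpha> + CARD('n)) + 2 * real j) * Jm \<alpha>))
      = Jm \<alpha> / unit_ball_vol ?p * (\<Sum>j\<le>?m. hc ?q ?m j * ((?q + real i) / (?q + real i + real j)))"
      unfolding r gk_def by (simp add: sum_distrib_left mult_ac)
    also have "\<dots> = Jm \<alpha> / unit_ball_vol ?p * (if i = 0 then 1 else 0)"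
      using kernel_eq[of ?q i ?m] im by simp
    also have "\<dots> = (if \<alpha> = (\<lambda>_. 0) then 1 else 0)"
    proof (cases "i = 0")
      case True
      then have "\<alpha> = (\<lambda>_. 0)" using i mdeg_eq_0 by auto
      then show ?thesis using True vol_nz[where 'n='n] by (simp add: J_zero)
    next
      case False
      then have "\<alpha> \<noteq> (\<lambda>_. 0)" using i by auto
      then show ?thesis using False by simp
    qed
    finally show ?thesis .
  qed
  finally show ?thesis .
qed

lemma ratio_id:
  fixes p j l :: real
  assumes "p > 0" "j \<ge> 0" "l \<ge> 0"
  shows "p / (p + 2 * (j + l)) = p / (p + 2 * j) * ((p/2 + j) / (p/2 + j + l))"
proof -
  have a: "p + 2 * (j + l) \<noteq> 0" "p + 2 * j \<noteq> 0" "p/2 + j + l \<noteq> 0" using assms by auto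
  have "(p/2 + j) / (p/2 + j + l) = (p + 2*j) / (p + 2 * (j + l))"
    using a by (simp add: field_simps)
  then show ?thesis using a by simp
qed

lemma kernel_rad:
  assumes "j \<le> m"
  shows "(\<integral>z. indicator (cball (0::real^'n::finite) 1) z * norm z ^ (2*j) * Kf m z \<partial>lborel) = (if j = 0 then 1 else 0)"
proof -
  let ?p = "real CARD('n)" and ?q = "real CARD('n) / 2"
  have "(\<integral>z. indicator (cball (0::real^'n::finite) 1) z * norm z ^ (2*j) * Kf m z \<partial>lborel)
     = (\<Sum>l\<le>m. gk TYPE('n) m l * (\<integral>z. indicator (cball (0::real^'n::finite) 1) z * norm z ^ (2*(j+l)) \<partial>lborel))"
  proof -
    have "(\<integral>z. indicator (cball (0::real^'n::finite) 1) z * norm z ^ (2*j) * Kf m z \<partial>lborel)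
     = (\<Sum>l\<le>m. gk TYPE('n) m l * (\<integral>z. indicator (cball (0::real^'n::finite) 1) z * norm z ^ (2*j) * norm z ^ (2*l) \<partial>lborel))"
      by (rule integral_K_aux[of "\<lambda>z. norm z ^ (2*j)" m]) (intro continuous_intros)
    then show ?thesis by (simp add: power_add mult_ac add_mult_distrib2)
  qed
  also have "\<dots> = (\<Sum>l\<le>m. gk TYPE('n) m l * (?p / (?p + 2 * real (j+l)) * unit_ball_vol ?p))"
    by (simp only: J_radial0)
  also have "\<dots> = ?p / (?p + 2 * real j) * (\<Sum>l\<le>m. hc ?q m l * ((?q + real j) / (?q + real j + real l)))"
  proof -
    have "gk TYPE('n) m l * (?p / (?p + 2 * real (j+l)) * unit_ball_vol ?p) = ?p / (?p + 2 * real j) * (hc ?q m l * ((?q + real j) / (?q + real j + real l)))" for l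
    proof -
      have v: "unit_ball_vol ?p \<noteq> 0" using vol_pos[where 'n='n] by linarith
      have "?p / (?p + 2 * real (j+l)) = ?p / (?p + 2 * real j) * ((?q + real j) / (?q + real j + real l))"
        using ratio_id[of ?p "real j" "real l"] by simp
      then show ?thesis using v by (simp add: gk_def)
    qed
    then show ?thesis by (simp add: sum_distrib_left)
  qed
  also have "\<dots> = (if j = 0 then 1 else 0)"
    using kernel_eq[of ?q j m] assms by simp
  finally show ?thesis .
qed

lemma kernel_sq:
  "(\<integral>z. indicator (cball (0::real^'n::finite) 1) z * Kf m z * Kf m z \<partial>lborel) = gk TYPE('n) m 0"
proof -
  have "(\<integral>z. indicator (cball (0::real^'n::finite) 1) z * Kf m z * Kf m z \<partial>lborel)
     = (\<Sum>j\<le>m. gk TYPE('n) m j * (\<integral>z. indicator (cball (0::real^'n) 1) z * norm z ^ (2*j) * Kf m z \<partial>lborel))"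
  proof -
    have "(\<integral>z. indicator (cball (0::real^'n::finite) 1) z * Kf m z * Kf m z \<partial>lborel)
      = (\<Sum>j\<le>m. gk TYPE('n) m j * (\<integral>z. indicator (cball (0::real^'n) 1) z * Kf m z * norm z ^ (2*j) \<partial>lborel))"
    proof -
      have c: "continuous_on (cball 0 1) (Kf m :: real^'n \<Rightarrow> real)" unfolding Kf_def by (intro continuous_intros)
      note X = integral_K_aux[OF c, of m]
      show ?thesis by (rule X)
    qed
    then show ?thesis by (simp add: mult_ac)
  qed
  also have "\<dots> = (\<Sum>j\<le>m. gk TYPE('n) m j * (if j = 0 then 1 else 0))"
    by (intro sum.cong refl) (simp add: kernel_rad)
  also have "\<dots> = (\<Sum>j\<le>m. (if j = 0 then gk TYPE('n) m j else 0))"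
    by (intro sum.cong refl) simp
  also have "\<dots> = gk TYPE('n) m 0" by (subst sum.delta) simp_all
  finally show ?thesis .
qed



definition lpe :: "(real \<times> ('n::finite \<Rightarrow> nat)) list \<Rightarrow> real^'n \<Rightarrow> real" where
  "lpe L z = sum_list (map (\<lambda>p. fst p * mon (snd p) z) L)"

definition lpoly :: "nat \<Rightarrow> (real^'n::finite \<Rightarrow> real) \<Rightarrow> bool" where
  "lpoly d F \<longleftrightarrow> (\<exists>L. (\<forall>p\<in>set L. mdeg (snd p) \<le> d) \<and> F = lpe L)"

lemma lpe_Nil [simp]: "lpe [] z = 0" by (simp add: lpe_def)
lemma lpe_Cons [simp]: "lpe (p # L) z = fst p * mon (snd p) z + lpe L z" by (simp add: lpe_def)
lemma lpe_append [simp]: "lpe (L1 @ L2) z = lpe L1 z + lpe L2 z" by (simp add: lpe_def)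

lemma lpe_cont [continuous_intros]: "continuous_on S (lpe L)"
proof (induction L)
  case Nil then show ?case by (simp add: lpe_def)
next
  case (Cons p L)
  have "lpe (p # L) = (\<lambda>z. fst p * mon (snd p) z + lpe L z)" by (simp add: fun_eq_iff)
  then show ?case using Cons by (simp add: continuous_intros)
qed

lemma lpe_kernel:
  fixes L :: "(real \<times> ('n::finite \<Rightarrow> nat)) list"
  assumes "\<forall>p\<in>set L. mdeg (snd p) \<le> d"
  shows "(\<integral>z. indicator (cball (0::real^'n) 1) z * lpe L z * Kf (d div 2) z \<partial>lborel) = lpe L 0"
  using assms
proof (induction L)
  case Nil then show ?case by simp
next
  case (Cons p L)
  let ?C = "cball (0::real^'n) 1" and ?K = "Kf (d div 2) :: real^'n \<Rightarrow> real"
  have cK: "continuous_on ?C ?K" unfolding Kf_def by (intro continuous_intros)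
  have i1: "integrable lborel (\<lambda>z. indicator ?C z * (fst p * mon (snd p) z * ?K z))"
    by (intro integrable_ball continuous_intros cK)
  have i2: "integrable lborel (\<lambda>z. indicator ?C z * (lpe L z * ?K z))"
    by (intro integrable_ball continuous_intros cK)
  have "(\<integral>z. indicator ?C z * lpe (p # L) z * ?K z \<partial>lborel) =
      (\<integral>z. indicator ?C z * (fst p * mon (snd p) z * ?K z) + indicator ?C z * (lpe L z * ?K z) \<partial>lborel)"
    by (simp add: algebra_simps)
  also have "\<dots> = (\<integral>z. indicator ?C z * (fst p * mon (snd p) z * ?K z) \<partial>lborel) + (\<integral>z. indicator ?C z * (lpe L z * ?K z) \<partial>lborel)"
    by (rule Bochner_Integration.integral_add[OF i1 i2])
  also have "(\<integral>z. indicator ?C z * (fst p * mon (snd p) z * ?K z) \<partial>lborel) = fst p * (\<integral>z. indicator ?C z * mon (snd p) z * ?K z \<partial>lborel)"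
    by (simp add: mult_ac)
  also have "\<dots> = fst p * mon (snd p) 0"
    using Cons.prems by (simp add: kernel_mon mon_at_0)
  also have "(\<integral>z. indicator ?C z * (lpe L z * ?K z) \<partial>lborel) = lpe L 0"
    using Cons by (simp add: mult_ac)
  finally show ?case by simp
qed

lemma lpoly_const: "lpoly d (\<lambda>z. c)"
  unfolding lpoly_def by (rule exI[of _ "[(c, \<lambda>_. 0)]"]) (simp add: mon_def fun_eq_iff)

lemma lpoly_coord: "lpoly 1 (\<lambda>z. z $ i)"
proof -
  have m: "mon (\<lambda>k. if k = i then 1 else 0) z = z $ i" for z :: "real^'a"
    unfolding mon_def by (simp add: power_0 if_distrib prod.If_cases)
  have d: "mdeg (\<lambda>k::'a. if k = i then 1 else 0) = 1"
    unfolding mdeg_def by simp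
  show ?thesis
    unfolding lpoly_def by (rule exI[of _ "[(1, \<lambda>k. if k = i then 1 else 0)]"]) (simp add: m d fun_eq_iff)
qed

lemma lpoly_add: "lpoly d F \<Longrightarrow> lpoly d G \<Longrightarrow> lpoly d (\<lambda>z. F z + G z)"
proof -
  assume "lpoly d F" "lpoly d G"
  then obtain L1 L2 where L1: "\<forall>p\<in>set L1. mdeg (snd p) \<le> d" "F = lpe L1"
    and L2: "\<forall>p\<in>set L2. mdeg (snd p) \<le> d" "G = lpe L2"
    unfolding lpoly_def by blast
  show ?thesis unfolding lpoly_def
    by (rule exI[of _ "L1 @ L2"]) (use L1 L2 in \<open>auto simp: fun_eq_iff\<close>)
qed

lemma lpoly_mono: "lpoly d F \<Longrightarrow> d \<le> e \<Longrightarrow> lpoly e F"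
  unfolding lpoly_def by (auto intro: order_trans)

lemma mon_add: "mon (\<lambda>i. a i + b i) z = mon a z * mon b z"
  by (simp add: mon_def power_add prod.distrib)

lemma mdeg_add: "mdeg (\<lambda>i. a i + b i) = mdeg a + mdeg b"
  by (simp add: mdeg_def sum.distrib)

lemma lpe_mult_aux:
  "lpe (map (\<lambda>q. (c * fst q, \<lambda>i. a i + snd q i)) L2) z = c * mon a z * lpe L2 z"
  by (induction L2) (simp_all add: mon_add algebra_simps)

lemma lpe_mult:
  "lpe (concat (map (\<lambda>p. map (\<lambda>q. (fst p * fst q, \<lambda>i. snd p i + snd q i)) L2) L1)) z = lpe L1 z * lpe L2 z"
  by (induction L1) (simp_all add: lpe_mult_aux algebra_simps)

lemma lpoly_mult: "lpoly a F \<Longrightarrow> lpoly b G \<Longrightarrow> lpoly (a + b) (\<lambda>z. F z * G z)"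
proof -
  assume "lpoly a F" "lpoly b G"
  then obtain L1 L2 where L1: "\<forall>p\<in>set L1. mdeg (snd p) \<le> a" "F = lpe L1"
    and L2: "\<forall>p\<in>set L2. mdeg (snd p) \<le> b" "G = lpe L2"
    unfolding lpoly_def by blast
  let ?L = "concat (map (\<lambda>p. map (\<lambda>q. (fst p * fst q, \<lambda>i. snd p i + snd q i)) L2) L1)"
  have "\<forall>p\<in>set ?L. mdeg (snd p) \<le> a + b"
    using L1(1) L2(1) by (auto simp: mdeg_add intro: add_mono)
  moreover have "(\<lambda>z. F z * G z) = lpe ?L"
    by (simp add: L1(2) L2(2) lpe_mult fun_eq_iff)
  ultimately show ?thesis unfolding lpoly_def by blast
qed

lemma lpoly_pow: "lpoly a F \<Longrightarrow> lpoly (a * n) (\<lambda>z. F z ^ n)"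
proof (induction n)
  case 0 then show ?case by (simp add: lpoly_const)
next
  case (Suc n)
  have "lpoly (a + a * n) (\<lambda>z. F z * F z ^ n)" by (rule lpoly_mult[OF Suc.prems Suc.IH[OF Suc.prems]])
  then show ?case by simp
qed

lemma lpoly_prod:
  assumes "finite A" "\<And>i. i \<in> A \<Longrightarrow> lpoly (e i) (F i)"
  shows "lpoly (\<Sum>i\<in>A. e i) (\<lambda>z. \<Prod>i\<in>A. F i z)"
  using assms
proof (induction A rule: finite_induct)
  case empty then show ?case by (simp add: lpoly_const)
next
  case (insert a A)
  have "lpoly (e a + (\<Sum>i\<in>A. e i)) (\<lambda>z. F a z * (\<Prod>i\<in>A. F i z))"
    using insert by (intro lpoly_mult) auto
  then show ?case using insert by simp
qed

lemma lpoly_sum: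
  assumes "\<And>i. i \<in> A \<Longrightarrow> lpoly d (F i)"
  shows "lpoly d (\<lambda>z. \<Sum>i\<in>A. F i z)"
proof (cases "finite A")
  case False then show ?thesis by (simp add: lpoly_const)
next
  case True
  then show ?thesis using assms
  proof (induction A rule: finite_induct)
    case empty then show ?case by (simp add: lpoly_const)
  next
    case (insert a A)
    then show ?case by (simp add: lpoly_add)
  qed
qed

lemma lpoly_scale: "lpoly d F \<Longrightarrow> lpoly d (\<lambda>z. c * F z)"
  using lpoly_mult[OF lpoly_const, of d F 0 c] by simp

lemma lpoly_affine_coord: "lpoly 1 (\<lambda>z::real^'n::finite. a + b * z $ i)"
  using lpoly_add[OF lpoly_mono[OF lpoly_const[of 0 a]] lpoly_scale[OF lpoly_coord[of i], of b]] by simp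



definition LL :: "nat \<Rightarrow> nat \<Rightarrow> real" where
  "LL d p = real (p + d choose d) * unit_ball_vol (real p) / (pochhammer (real p / 2 + 1) (d div 2) / fact (d div 2))^2"

definition RR :: "nat \<Rightarrow> nat \<Rightarrow> real" where
  "RR d p = omega p * (real ((d+1)*(d+2)*(d+3)) / real ((d + p + 1) * (d + p + 2) * (2*d + p + 6)))"

lemma ubv_step: "unit_ball_vol (real (p+2)) = unit_ball_vol (real p) * pi / (real p / 2 + 1)"
proof -
  have a: "real (p+2) / 2 = real p / 2 + 1" by simp
  have g: "Gamma (real p / 2 + 1 + 1) = (real p / 2 + 1) * Gamma (real p / 2 + 1)"
    by (rule Gamma_plus1) (auto dest: nonpos_Ints_nonpos)
  have pw: "pi powr (real p / 2 + 1) = pi powr (real p / 2) * pi" by (simp add: powr_add)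
  have "(real p / 2 + 1) \<noteq> 0" by simp
  then show ?thesis unfolding unit_ball_vol_def a g pw by (simp add: field_simps)
qed

lemma omega_step: "omega (p+2) = omega p * pi / ((real p + 1) / 2)"
proof -
  have a: "(real (p+2) + 1) / 2 = (real p + 1) / 2 + 1" by simp
  have g: "Gamma ((real p + 1) / 2 + 1) = ((real p + 1) / 2) * Gamma ((real p + 1) / 2)"
    by (rule Gamma_plus1) (auto dest: nonpos_Ints_nonpos)
  have pw: "pi powr ((real p + 1) / 2 + 1) = pi powr ((real p + 1) / 2) * pi" by (simp add: powr_add)
  have "((real p + 1) / 2) \<noteq> 0" by simp
  then show ?thesis unfolding omega_def a g pw by (simp add: field_simps)
qed

lemma binom_step: "real (p + 2 + d choose d) = real (p + d choose d) * (real (p+d+1) * real (p+d+2)) / (real (p+1) * real (p+2))"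
proof -
  have e1: "real (p + 2 + d choose d) = fact (p+2+d) / (fact d * fact (p+2))"
    by (subst binomial_fact) auto
  have e2: "real (p + d choose d) = fact (p+d) / (fact d * fact p)"
    by (subst binomial_fact) auto
  have f1: "(fact (p+2+d) :: real) = fact (p+d) * (real (p+d+1) * real (p+d+2))"
    by (simp add: algebra_simps fact_Suc del: of_nat_Suc)
  have f2: "(fact (p+2) :: real) = fact p * (real (p+1) * real (p+2))"
    by (simp add: algebra_simps fact_Suc del: of_nat_Suc)
  show ?thesis unfolding e1 e2 f1 f2 by (simp add: field_simps)
qed

lemma poch_step:
  fixes a :: real assumes "a > 0"
  shows "pochhammer (a + 1) m = pochhammer a m * (a + real m) / a"
proof -
  have "pochhammer a (Suc m) = a * pochhammer (a+1) m" by (simp add: pochhammer_rec)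
  moreover have "pochhammer a (Suc m) = pochhammer a m * (a + real m)" by (simp add: pochhammer_Suc)
  ultimately show ?thesis using assms by (simp add: field_simps)
qed

lemma LL_generic:
  fixes Bc A V P F h D b1 b2 :: real
  assumes "b1 \<noteq> 0" "h \<noteq> 0" "P \<noteq> 0" "F \<noteq> 0" "D \<noteq> 0" "b2 = 2 * h"
  shows "Bc * A / (b1 * b2) * (V * pi / h) / ((P * D / h) / F)^2
       = Bc * V / (P / F)^2 * ((2 * pi * A / b1) / (2 * D)^2)"
  using assms by (simp add: field_simps power2_eq_square)

lemma LL_step:
  "LL d (p+2) = LL d p * ((2 * pi * real (p+d+1) * real (p+d+2) / real (p+1)) / (real p + 2 + 2 * real (d div 2))^2)"
proof -
  let ?m = "d div 2" and ?a = "real p / 2 + 1"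
  have ea: "real (p+2) / 2 + 1 = ?a + 1" by simp
  have B: "pochhammer (?a + 1) ?m = pochhammer ?a ?m * (?a + real ?m) / ?a"
    by (rule poch_step) simp
  have pos: "pochhammer ?a ?m > 0" by (intro pochhammer_pos) simp
  have e2: "real (p+2) = 2 * ?a" by simp
  have e3: "real p + 2 + 2 * real ?m = 2 * (?a + real ?m)" by simp
  have "LL d (p+2) = real (p + 2 + d choose d) * unit_ball_vol (real (p+2)) / (pochhammer (real (p+2) / 2 + 1) ?m / fact ?m)^2"
    by (simp add: LL_def add_ac)
  also have "\<dots> = real (p + d choose d) * (real (p+d+1) * real (p+d+2)) / (real (p+1) * real (p+2)) * (unit_ball_vol (real p) * pi / ?a) / ((pochhammer ?a ?m * (?a + real ?m) / ?a) / fact ?m)^2"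
    unfolding binom_step ubv_step ea B ..
  also have "\<dots> = LL d p * ((2 * pi * (real (p+d+1) * real (p+d+2)) / real (p+1)) / (2 * (?a + real ?m))^2)"
    unfolding LL_def by (rule LL_generic) (use pos e2 in auto)
  finally show ?thesis unfolding e3 by (simp add: mult_ac)
qed

lemma RR_generic:
  fixes w N Z A Y x :: real
  assumes "A \<noteq> 0" "Y \<noteq> 0" "x + 1 \<noteq> 0"
  shows "w * pi / ((x + 1) / 2) * (N / Z) = w * (N / (A * Y)) * ((2 * pi * A / (x + 1)) * (Y / Z))"
  using assms by (simp add: field_simps)

lemma RR_step:
  "RR d (p+2) = RR d p * ((2 * pi * real (d+p+1) * real (d+p+2) / (real p + 1)) * (real (2*d+p+6) / (real (d+p+3) * real (d+p+4) * real (2*d+p+8))))"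
proof -
  have n: "d + (p+2) + 1 = d+p+3" "d+(p+2)+2 = d+p+4" "2*d+(p+2)+6 = 2*d+p+8" by simp_all
  have r: "real ((d + (p+2) + 1) * (d + (p+2) + 2) * (2*d + (p+2) + 6)) = real (d+p+3) * real (d+p+4) * real (2*d+p+8)"
    by (simp only: n of_nat_mult)
  have "RR d (p+2) = omega p * pi / ((real p + 1) / 2) * (real ((d+1)*(d+2)*(d+3)) / (real (d+p+3) * real (d+p+4) * real (2*d+p+8)))"
    unfolding RR_def omega_step r ..
  also have "\<dots> = omega p * (real ((d+1)*(d+2)*(d+3)) / ((real (d+p+1) * real (d+p+2)) * real (2*d+p+6))) * ((2 * pi * (real (d+p+1) * real (d+p+2)) / (real p + 1)) * (real (2*d+p+6) / (real (d+p+3) * real (d+p+4) * real (2*d+p+8))))"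
    by (rule RR_generic) auto
  also have "\<dots> = RR d p * ((2 * pi * real (d+p+1) * real (d+p+2) / (real p + 1)) * (real (2*d+p+6) / (real (d+p+3) * real (d+p+4) * real (2*d+p+8))))"
    by (simp only: RR_def of_nat_mult mult.assoc)
  finally show ?thesis .
qed

lemma Gamma_pos': "x > 0 \<Longrightarrow> Gamma (x::real) > 0"
  by (rule Gamma_real_pos)

lemma Gamma_half_bound: "Gamma (real m + 3/2)^2 \<le> Gamma (real m + 1) * Gamma (real m + 2)"
proof -
  have "(ln \<circ> Gamma) ((1 - 1/2) *\<^sub>R (real m + 1) + (1/2) *\<^sub>R (real m + 2)) \<le> (1 - 1/2) * (ln \<circ> Gamma) (real m + 1) + (1/2) * (ln \<circ> Gamma) (real m + 2)"
    by (rule convex_onD[OF log_convex_Gamma_real]) auto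
  moreover have "(1 - 1/2) *\<^sub>R (real m + 1) + (1/2) *\<^sub>R (real m + 2) = real m + 3/2" by (simp add: field_simps)
  ultimately have h1: "ln (Gamma (real m + 3/2)) \<le> (ln (Gamma (real m + 1)) + ln (Gamma (real m + 2))) / 2"
    by simp
  have g1: "Gamma (real m + 3/2) > 0" "Gamma (real m + 1) > 0" "Gamma (real m + 2) > 0"
    by (simp_all add: Gamma_pos')
  have h2: "ln (Gamma (real m + 3/2)^2) = 2 * ln (Gamma (real m + 3/2))"
    using g1(1) by (subst ln_realpow) auto
  have h3: "ln (Gamma (real m + 1) * Gamma (real m + 2)) = ln (Gamma (real m + 1)) + ln (Gamma (real m + 2))"
  proof -
    have "Gamma (real m + 1) \<noteq> 0" "Gamma (real m + 2) \<noteq> 0"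
      by (rule order.strict_implies_not_eq[OF Gamma_real_pos, symmetric], simp)+
    then show ?thesis by (simp add: ln_mult)
  qed
  have "ln (Gamma (real m + 3/2)^2) \<le> ln (Gamma (real m + 1) * Gamma (real m + 2))"
    unfolding h2 h3 using h1 by (simp add: field_simps)
  moreover have a: "0 < Gamma (real m + 3/2)^2" by (rule zero_less_power[OF g1(1)])
  moreover have b: "0 < Gamma (real m + 1) * Gamma (real m + 2)" by (rule mult_pos_pos[OF g1(2) g1(3)])
  ultimately show ?thesis using ln_le_cancel_iff[OF a b] by blast
qed

lemma base1: "RR d 1 \<le> LL d 1"
proof -
  let ?m = "d div 2"
  let ?B = "pochhammer (3/2::real) ?m / fact ?m"
  have om: "omega 1 = 2 * pi" "omega (Suc 0) = 2 * pi" by (simp_all add: omega_def)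
  have LL1: "LL d 1 = real (d+1) * 2 / ?B^2"
  proof -
    have "real 1 / 2 + 1 = (3/2::real)" by simp
    moreover have "1 + d choose d = d + 1" using binomial_Suc_n[of d] by simp
    ultimately show ?thesis by (simp add: LL_def)
  qed
  have RR1: "RR d 1 = 2 * pi * real (d+1) / real (2*d+7)"
  proof -
    have "real ((d+1)*(d+2)*(d+3)) / real ((d + 1 + 1) * (d + 1 + 2) * (2*d + 1 + 6)) = (real (d+1) * (real (d+2) * real (d+3))) / (real (2*d+7) * (real (d+2) * real (d+3)))"
      by (simp only: of_nat_mult mult_ac) (simp add: add_ac)
    also have "\<dots> = real (d+1) / real (2*d+7)"
      by (rule mult_divide_mult_cancel_right) simp
    finally have "real ((d+1)*(d+2)*(d+3)) / real ((d + 1 + 1) * (d + 1 + 2) * (2*d + 1 + 6)) = real (d+1) / real (2*d+7)" .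
    then show ?thesis by (simp add: RR_def om)
  qed
  have G32: "Gamma (3/2::real) = sqrt pi / 2"
  proof -
    have "Gamma (1/2 + 1 :: real) = 1/2 * Gamma (1/2)" by (rule Gamma_plus1) (auto dest: nonpos_Ints_nonpos)
    then show ?thesis by (simp add: Gamma_one_half_real)
  qed
  have poch: "pochhammer (3/2::real) ?m = Gamma (real ?m + 3/2) / Gamma (3/2)"
    by (subst pochhammer_Gamma) (auto dest: nonpos_Ints_nonpos simp: add_ac)
  have F1: "Gamma (real ?m + 1) = fact ?m" using Gamma_fact[of ?m] by (simp add: add_ac)
  have F2: "Gamma (real ?m + 2) = (real ?m + 1) * fact ?m"
  proof -
    have "Gamma (real ?m + 1 + 1) = (real ?m + 1) * Gamma (real ?m + 1)"
      by (rule Gamma_plus1) (auto dest: nonpos_Ints_nonpos)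
    then show ?thesis using F1 by (simp add: add_ac)
  qed
  have piB: "pi * ?B^2 = 4 * Gamma (real ?m + 3/2)^2 / (fact ?m)^2"
    unfolding poch G32 by (simp add: field_simps power2_eq_square)
  also have "\<dots> \<le> 4 * (Gamma (real ?m + 1) * Gamma (real ?m + 2)) / (fact ?m)^2"
    using Gamma_half_bound[of ?m] by (intro divide_right_mono mult_left_mono) auto
  also have "\<dots> = 4 * (real ?m + 1)"
    unfolding F1 F2 by (simp add: power2_eq_square)
  also have "\<dots> \<le> real (2*d+7)" by simp
  finally have key: "pi * ?B^2 \<le> real (2*d+7)" .
  have Bpos: "?B > 0" by (simp add: pochhammer_pos)
  have "2 * pi * real (d+1) / real (2*d+7) \<le> real (d+1) * 2 / ?B^2"
    using key Bpos by (simp add: divide_simps) (simp add: mult_ac)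
  then show ?thesis unfolding LL1 RR1 .
qed

lemma base2: "RR d 2 \<le> LL d 2"
proof -
  let ?m = "d div 2"
  have om: "omega 2 = 4 * pi"
  proof -
    have G32: "Gamma (3/2::real) = sqrt pi / 2"
    proof -
      have "Gamma (1/2 + 1 :: real) = 1/2 * Gamma (1/2)" by (rule Gamma_plus1) (auto dest: nonpos_Ints_nonpos)
      then show ?thesis by (simp add: Gamma_one_half_real)
    qed
    have "pi powr (3/2) = pi powr (1 + 1/2)" by simp
    also have "\<dots> = pi * sqrt pi" by (subst powr_add) (simp add: powr_half_sqrt)
    finally have pw: "pi powr (3/2) = pi * sqrt pi" .
    have "omega 2 = 2 * pi powr (3/2) / Gamma (3/2)" by (simp add: omega_def)
    also have "\<dots> = 2 * (pi * sqrt pi) / (sqrt pi / 2)" unfolding pw G32 ..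
    also have "\<dots> = 4 * pi" by simp
    finally show ?thesis .
  qed
  have poch: "pochhammer (2::real) ?m = fact ?m * (real ?m + 1)"
    using poch_step[of 1 ?m] by (simp add: pochhammer_fact)
  have bin: "real (2 + d choose d) = real (d+1) * real (d+2) / 2"
  proof -
    have "real (2 + d choose d) = fact (2+d) / (fact d * fact 2)" by (subst binomial_fact) auto
    moreover have "(fact (2+d) :: real) = fact d * (real (d+1) * real (d+2))"
      by (simp add: algebra_simps fact_Suc del: of_nat_Suc)
    ultimately show ?thesis by simp
  qed
  have e: "pochhammer (real 2 / 2 + 1) ?m / fact ?m = real ?m + 1" using poch by simp
  have v: "unit_ball_vol (real 2) = pi" using unit_ball_vol_2 by simp
  have LL2: "LL d 2 = real (d+1) * real (d+2) / 2 * pi / (real ?m + 1)^2"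
    unfolding LL_def e v bin ..
  have RR2: "RR d 2 = 4 * pi * real (d+1) * real (d+2) / (2 * real (d+4)^2)"
  proof -
    have n1: "(d + 2 + 1) * (d + 2 + 2) * (2*d + 2 + 6) = (2 * (d+4)^2) * (d+3)"
      by (simp add: power2_eq_square algebra_simps)
    have "real ((d+1)*(d+2)*(d+3)) / real ((d + 2 + 1) * (d + 2 + 2) * (2*d + 2 + 6))
       = real ((d+1)*(d+2)) * real (d+3) / (real (2 * (d+4)^2) * real (d+3))"
      unfolding n1 of_nat_mult ..
    also have "\<dots> = real ((d+1)*(d+2)) / real (2 * (d+4)^2)"
      by (rule mult_divide_mult_cancel_right) simp
    also have "\<dots> = real (d+1) * real (d+2) / (2 * real (d+4)^2)" by (simp only: of_nat_mult of_nat_power of_nat_numeral)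
    finally have "real ((d+1)*(d+2)*(d+3)) / real ((d + 2 + 1) * (d + 2 + 2) * (2*d + 2 + 6)) = real (d+1) * real (d+2) / (2 * real (d+4)^2)" .
    then show ?thesis by (simp add: RR_def om)
  qed
  have k0: "real (2 * ?m) \<le> real d" by (simp only: of_nat_le_iff)
  then have key: "2 * (real ?m + 1) \<le> real (d+4)" by simp
  then have sq: "(2 * (real ?m + 1))^2 \<le> real (d+4)^2"
    by (intro power_mono) auto
  have sq2: "(2 * (real ?m + 1))^2 = 4 * (real ?m + 1)^2" by (simp add: power2_eq_square algebra_simps)
  have key2: "4 * (real ?m + 1)^2 \<le> real (d+4)^2"
    using sq unfolding sq2 .
  have Ypos: "0 < (real ?m + 1)^2" by simp
  have "4 * pi * real (d+1) * real (d+2) / (2 * real (d+4)^2) \<le> real (d+1) * real (d+2) / 2 * pi / (real ?m + 1)^2"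
  proof -
    have A: "real (d+1) * real (d+2) * pi \<ge> 0" by simp
    have "2 / real (d+4)^2 \<le> 2 / (4 * (real ?m + 1)^2)"
      by (rule divide_left_mono[OF key2]) (use Ypos in auto)
    also have "\<dots> = 1 / (2 * (real ?m + 1)^2)" by simp
    finally have "2 / real (d+4)^2 \<le> 1 / (2 * (real ?m + 1)^2)" .
    from mult_left_mono[OF this A]
    have le: "real (d+1) * real (d+2) * pi * (2 / real (d+4)^2) \<le> real (d+1) * real (d+2) * pi * (1 / (2 * (real ?m + 1)^2))" .
    have eqL: "4 * pi * real (d+1) * real (d+2) / (2 * real (d+4)^2) = real (d+1) * real (d+2) * pi * (2 / real (d+4)^2)"
      by simp
    have eqR: "real (d+1) * real (d+2) / 2 * pi / (real ?m + 1)^2 = real (d+1) * real (d+2) * pi * (1 / (2 * (real ?m + 1)^2))"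
      by simp
    show ?thesis unfolding eqL eqR by (rule le)
  qed
  then show ?thesis unfolding LL2 RR2 .
qed

lemma LL_nonneg: "LL d p \<ge> 0"
  unfolding LL_def by simp

lemma step_ineq:
  assumes "RR d p \<le> LL d p"
  shows "RR d (p+2) \<le> LL d (p+2)"
proof -
  let ?m = "d div 2"
  let ?c = "2 * pi * real (d+p+1) * real (d+p+2) / (real p + 1)"
  let ?X = "(real p + 2 + 2 * real ?m)^2"
  let ?Y = "real (2*d+p+6)" and ?Z = "real (d+p+3) * real (d+p+4) * real (2*d+p+8)"
  have c0: "?c \<ge> 0" by simp
  have nat_ineq: "(p+2+2*?m)^2 * (2*d+p+6) \<le> (d+p+3)*(d+p+4)*(2*d+p+8)"
  proof -
    have "(p+2+2*?m)^2 \<le> (d+p+3)*(d+p+4)"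
    proof -
      have "p+2+2*?m \<le> d+p+3" by simp
      then have "(p+2+2*?m)^2 \<le> (d+p+3)^2" by (rule power_mono) simp
      also have "\<dots> \<le> (d+p+3)*(d+p+4)" by (simp add: power2_eq_square)
      finally show ?thesis .
    qed
    moreover have "2*d+p+6 \<le> 2*d+p+8" by simp
    ultimately show ?thesis by (intro mult_mono) auto
  qed
  have XYZ: "?X * ?Y \<le> ?Z"
  proof -
    have "real ((p+2+2*?m)^2 * (2*d+p+6)) \<le> real ((d+p+3)*(d+p+4)*(2*d+p+8))"
      using nat_ineq by (simp only: of_nat_le_iff)
    then show ?thesis by (simp add: add_ac)
  qed
  have Xpos: "?X > 0" by simp
  have Zpos: "?Z > 0" by simp
  have YZ: "?Y / ?Z \<le> 1 / ?X" using XYZ Xpos Zpos by (simp add: divide_simps mult_ac)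
  have "RR d (p+2) = RR d p * (?c * (?Y / ?Z))" by (rule RR_step)
  also have "\<dots> \<le> LL d p * (?c * (?Y / ?Z))"
    using assms c0 by (intro mult_right_mono) auto
  also have "\<dots> \<le> LL d p * (?c / ?X)"
    using YZ c0 LL_nonneg[of d p] by (intro mult_left_mono) (auto simp: divide_simps)
  also have "\<dots> = LL d (p+2)"
    using LL_step[of d p] by (simp add: add_ac mult_ac)
  finally show ?thesis .
qed

lemma Gineq_LR: "p \<ge> 1 \<Longrightarrow> RR d p \<le> LL d p"
proof (induction p rule: less_induct)
  case (less p)
  show ?case
  proof (cases "p \<le> 2")
    case True
    then have "p = 1 \<or> p = 2" using less.prems by auto
    then show ?thesis using base1[of d] base2[of d] by (elim disjE) simp_all
  next
    case False
    define q where "q = p - 2"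
    have q: "p = q + 2" "q \<ge> 1" using False by (simp_all add: q_def)
    have "q < p" using q(1) by simp
    then have "RR d q \<le> LL d q" using less.IH[of q] q(2) by blast
    then have "RR d (q+2) \<le> LL d (q+2)" by (rule step_ineq)
    then show ?thesis using q(1) by simp
  qed
qed



lemma polys_affine:
  assumes "P \<in> polys_deg d"
  shows "lpoly d (\<lambda>z::real^'n::finite. P (x + \<delta> *\<^sub>R z))"
proof -
  obtain c where P: "P = (\<lambda>x. \<Sum>\<alpha>\<in>multi_idx d. c \<alpha> * (\<Prod>i\<in>UNIV. (x $ i) ^ \<alpha> i))"
    using assms unfolding polys_deg_def by blast
  have "lpoly d (\<lambda>z::real^'n. \<Sum>\<alpha>\<in>multi_idx d. c \<alpha> * (\<Prod>i\<in>UNIV. (x $ i + \<delta> * z $ i) ^ \<alpha> i))"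
  proof (intro lpoly_sum lpoly_scale)
    fix \<alpha> :: "'n \<Rightarrow> nat" assume a: "\<alpha> \<in> multi_idx d"
    have "lpoly (\<Sum>i\<in>UNIV. 1 * \<alpha> i) (\<lambda>z::real^'n. \<Prod>i\<in>UNIV. (x $ i + \<delta> * z $ i) ^ \<alpha> i)"
      by (intro lpoly_prod lpoly_pow lpoly_affine_coord) simp
    then show "lpoly d (\<lambda>z::real^'n. \<Prod>i\<in>UNIV. (x $ i + \<delta> * z $ i) ^ \<alpha> i)"
      using a by (auto simp: multi_idx_def intro: lpoly_mono)
  qed
  then show ?thesis by (simp add: P)
qed

lemma polys_cont:
  assumes "P \<in> polys_deg d"
  shows "continuous_on S P"
proof -
  obtain c where P: "P = (\<lambda>x. \<Sum>\<alpha>\<in>multi_idx d. c \<alpha> * (\<Prod>i\<in>UNIV. (x $ i) ^ \<alpha> i))"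
    using assms unfolding polys_deg_def by blast
  show ?thesis unfolding P by (intro continuous_intros)
qed

lemma finite_multi_idx: "finite (multi_idx d :: ('n::finite \<Rightarrow> nat) set)"
proof (rule finite_subset)
  show "multi_idx d \<subseteq> PiE UNIV (\<lambda>_::'n. {..d})"
  proof
    fix \<alpha> :: "'n \<Rightarrow> nat" assume "\<alpha> \<in> multi_idx d"
    then have "\<alpha> i \<le> d" for i
      using member_le_sum[of i UNIV \<alpha>] by (auto simp: multi_idx_def)
    then show "\<alpha> \<in> PiE UNIV (\<lambda>_. {..d})" by (auto simp: PiE_def extensional_def)
  qed
  show "finite (PiE UNIV (\<lambda>_::'n. {..d}))" by (intro finite_PiE) auto
qed

lemma one_in_polys: "(\<lambda>_. 1) \<in> (polys_deg d :: (real^'n::finite \<Rightarrow> real) set)"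
proof -
  let ?c = "\<lambda>\<alpha>::'n\<Rightarrow>nat. if \<alpha> = (\<lambda>_. 0) then 1 else (0::real)"
  have "(\<Sum>\<alpha>\<in>multi_idx d. ?c \<alpha> * (\<Prod>i\<in>UNIV. (x $ i) ^ \<alpha> i)) = 1" for x :: "real^'n"
  proof -
    have "(\<Sum>\<alpha>\<in>multi_idx d. ?c \<alpha> * (\<Prod>i\<in>UNIV. (x $ i) ^ \<alpha> i)) = (\<Sum>\<alpha>\<in>multi_idx d. if \<alpha> = (\<lambda>_::'n. 0) then 1 else 0)"
      by (intro sum.cong refl) simp
    also have "\<dots> = 1" using finite_multi_idx[of d, where 'n='n] by (subst sum.delta) (auto simp: multi_idx_def)
    finally show ?thesis .
  qed
  then show ?thesis unfolding polys_deg_def by (intro CollectI exI[of _ ?c]) (simp add: fun_eq_iff)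
qed

lemma gk0_pos: "gk TYPE('n::finite) m 0 > 0"
proof -
  have "pochhammer (real CARD('n) / 2 + 1) m > 0" by (intro pochhammer_pos) simp
  then show ?thesis unfolding gk_def hc_0 using vol_pos[where 'n='n] by simp
qed

lemma ball_bound:
  fixes F :: "real^'n::finite \<Rightarrow> real"
  assumes "lpoly d F" "F 0 = 1"
  shows "(\<integral>z. indicator (cball 0 1) z * (F z)^2 \<partial>lborel) \<ge> 1 / gk TYPE('n) (d div 2) 0"
proof -
  obtain L where L: "\<forall>p\<in>set L. mdeg (snd p) \<le> d" "F = lpe L"
    using assms(1) unfolding lpoly_def by blast
  let ?C = "cball (0::real^'n) 1" and ?K = "Kf (d div 2) :: real^'n \<Rightarrow> real"
  let ?g = "gk TYPE('n) (d div 2) 0"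
  define t where "t = 1 / ?g"
  have g: "?g > 0" by (rule gk0_pos)
  have cF: "continuous_on ?C F" unfolding L(2) by (intro continuous_intros)
  have cK: "continuous_on ?C ?K" unfolding Kf_def by (intro continuous_intros)
  have FK: "(\<integral>z. indicator ?C z * F z * ?K z \<partial>lborel) = 1"
    using lpe_kernel[OF L(1)] assms(2) L(2) by simp
  have KK: "(\<integral>z. indicator ?C z * ?K z * ?K z \<partial>lborel) = ?g" by (rule kernel_sq)
  have i1: "integrable lborel (\<lambda>z. indicator ?C z * (F z)^2)"
    by (intro integrable_ball continuous_intros cF)
  have i2: "integrable lborel (\<lambda>z. indicator ?C z * (2 * t * (F z * ?K z)))"
    by (intro integrable_ball continuous_intros cF cK)
  have i3: "integrable lborel (\<lambda>z. indicator ?C z * (t^2 * (?K z * ?K z)))"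
    by (intro integrable_ball continuous_intros cK)
  have "0 \<le> (\<integral>z. indicator ?C z * (F z - t * ?K z)^2 \<partial>lborel)"
    by (intro Bochner_Integration.integral_nonneg) (simp add: indicator_def)
  also have "\<dots> = (\<integral>z. indicator ?C z * (F z)^2 - indicator ?C z * (2 * t * (F z * ?K z)) + indicator ?C z * (t^2 * (?K z * ?K z)) \<partial>lborel)"
    by (intro Bochner_Integration.integral_cong refl) (simp add: power2_eq_square algebra_simps)
  also have "\<dots> = (\<integral>z. indicator ?C z * (F z)^2 \<partial>lborel) - (\<integral>z. indicator ?C z * (2 * t * (F z * ?K z)) \<partial>lborel) + (\<integral>z. indicator ?C z * (t^2 * (?K z * ?K z)) \<partial>lborel)"
    using i1 i2 i3 by simp
  also have "(\<integral>z. indicator ?C z * (2 * t * (F z * ?K z)) \<partial>lborel) = (\<integral>z. (2 * t) * (indicator ?C z * F z * ?K z) \<partial>lborel)"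
    by (rule arg_cong[where f="integral\<^sup>L lborel"]) (simp add: fun_eq_iff mult_ac)
  also have "\<dots> = 2 * t * (\<integral>z. indicator ?C z * F z * ?K z \<partial>lborel)"
    by (rule integral_mult_right_zero)
  also have "(\<integral>z. indicator ?C z * (t^2 * (?K z * ?K z)) \<partial>lborel) = (\<integral>z. t^2 * (indicator ?C z * ?K z * ?K z) \<partial>lborel)"
    by (rule arg_cong[where f="integral\<^sup>L lborel"]) (simp add: fun_eq_iff mult_ac)
  also have "\<dots> = t^2 * (\<integral>z. indicator ?C z * ?K z * ?K z \<partial>lborel)"
    by (rule integral_mult_right_zero)
  finally have "0 \<le> (\<integral>z. indicator ?C z * (F z)^2 \<partial>lborel) - 2 * t + t^2 * ?g"
    unfolding FK KK by simp
  moreover have "t^2 * ?g = t" using g by (simp add: t_def power2_eq_square)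
  ultimately show ?thesis by (simp add: t_def)
qed

lemma Gineq:
  assumes "p \<ge> 1"
  shows "omega p * (real ((d+1)*(d+2)*(d+3)) / real ((d + p + 1) * (d + p + 2) * (2*d + p + 6)))
     \<le> real (p + d choose d) * unit_ball_vol (real p) / (pochhammer (real p / 2 + 1) (d div 2) / fact (d div 2))^2"
  using Gineq_LR[OF assms, of d] unfolding RR_def LL_def .

theorem lemma6p2:
  fixes S :: "(real^'n::finite) set" and \<delta> :: real and x :: "real^'n" and d :: nat
  assumes "compact S"
    and "closure (interior S) = S"
    and "\<delta> > 0"
    and "x \<in> S"
    and "infdist x (frontier S) \<ge> \<delta>"
  shows "real (CARD('n) + d choose d) * christoffel (uniform_measure lborel S) d x
     \<ge> \<delta> ^ CARD('n) * omega (CARD('n)) / measure lborel S *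
        (real ((d+1)*(d+2)*(d+3)) / real ((d + CARD('n) + 1) * (d + CARD('n) + 2) * (2*d + CARD('n) + 6)))"
proof -
  let ?p = "CARD('n)"
  let ?g = "gk TYPE('n) (d div 2) 0"
  let ?B = "pochhammer (real ?p / 2 + 1) (d div 2) / fact (d div 2)"
  let ?vol = "unit_ball_vol (real ?p)"
  let ?R = "real ((d+1)*(d+2)*(d+3)) / real ((d + ?p + 1) * (d + ?p + 2) * (2*d + ?p + 6))"
  have cS: "closed S" using assms(1) compact_imp_closed by blast
  have ballS: "ball x \<delta> \<subseteq> S"
  proof
    fix y assume y: "y \<in> ball x \<delta>"
    show "y \<in> S"
    proof (rule ccontr)
      assume yS: "y \<notin> S"
      have "closed_segment x y \<inter> frontier S \<noteq> {}"
      proof (rule connected_Int_frontier)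
        show "connected (closed_segment x y)" by simp
        show "closed_segment x y \<inter> S \<noteq> {}" using assms(4) by auto
        show "closed_segment x y - S \<noteq> {}" using yS by auto
      qed
      then obtain z where z: "z \<in> closed_segment x y" "z \<in> frontier S" by auto
      have "dist z x \<le> dist x y" using dist_in_closed_segment[OF z(1)] by simp
      moreover have "infdist x (frontier S) \<le> dist x z" by (rule infdist_le[OF z(2)])
      ultimately show False using y assms(5) by (simp add: dist_commute)
    qed
  qed
  have cballS: "cball x \<delta> \<subseteq> S"
    using closure_mono[OF ballS] closure_closed[OF cS] assms(3) by simp
  have Sf: "S \<in> fmeasurable lborel" by (rule fmeasurable_compact[OF assms(1)])
  have mS: "measure lborel S \<ge> ?vol * \<delta> ^ ?p"
  proof -
    have "measure lborel (cball x \<delta>) \<le> measure lborel S"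
      by (rule measure_mono_fmeasurable[OF cballS _ Sf]) simp
    moreover have "measure lborel (cball x \<delta>) = ?vol * \<delta> ^ ?p"
      using assms(3) by (simp add: measure_def emeasure_cball)
    ultimately show ?thesis by simp
  qed
  have mSpos: "measure lborel S > 0"
    using mS vol_pos[where 'n='n] assms(3) by (smt (verit) mult_pos_pos zero_less_power)
  have emS: "emeasure lborel S = ennreal (measure lborel S)"
    using Sf by (simp add: emeasure_eq_ennreal_measure fmeasurable_def less_top[symmetric])
  have um: "uniform_measure lborel S = density lborel (\<lambda>y. ennreal (indicator S y / measure lborel S))"
  proof -
    have "indicator S y / emeasure lborel S = ennreal (indicator S y / measure lborel S)" for y
      unfolding emS using mSpos divide_ennreal[of 1 "measure lborel S"] by (auto simp: indicator_def)
    then show ?thesis unfolding uniform_measure_def by simp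
  qed
  have g: "?g > 0" by (rule gk0_pos)
  have key: "\<delta> ^ ?p / (measure lborel S * ?g) \<le> (\<integral>y. (P y)^2 \<partial>uniform_measure lborel S)"
    if P: "P \<in> polys_deg d" "P x = 1" for P
  proof -
    have cP: "continuous_on UNIV P" by (rule polys_cont[OF P(1)])
    have Pm[measurable]: "P \<in> borel_measurable borel" using cP by (rule borel_measurable_continuous_onI)
    have [measurable]: "S \<in> sets borel" using assms(1) by (simp add: borel_compact)
    have "(\<integral>y. (P y)^2 \<partial>uniform_measure lborel S) = (\<integral>y. indicator S y / measure lborel S * (P y)^2 \<partial>lborel)"
      unfolding um by (subst integral_density) (auto simp: indicator_def)
    also have "\<dots> = (\<integral>y. indicator S y * (P y)^2 \<partial>lborel) / measure lborel S"
      by (simp add: divide_simps mult_ac)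
    finally have e1: "(\<integral>y. (P y)^2 \<partial>uniform_measure lborel S) = (\<integral>y. indicator S y * (P y)^2 \<partial>lborel) / measure lborel S" .
    have i1: "integrable lborel (\<lambda>y. indicator S y * (P y)^2)"
      using borel_integrable_compact[OF assms(1), of "\<lambda>y. (P y)^2"] continuous_on_subset[OF cP]
      by (simp add: continuous_intros)
    have i2: "integrable lborel (\<lambda>y. indicator (cball x \<delta>) y * (P y)^2)"
      using borel_integrable_compact[OF compact_cball, of x \<delta> "\<lambda>y. (P y)^2"] continuous_on_subset[OF cP]
      by (simp add: continuous_intros)
    have e2: "(\<integral>y. indicator (cball x \<delta>) y * (P y)^2 \<partial>lborel) \<le> (\<integral>y. indicator S y * (P y)^2 \<partial>lborel)"
      by (rule integral_mono[OF i2 i1]) (use cballS in \<open>auto simp: indicator_def\<close>)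
    have ind: "indicator (cball x \<delta>) (x + \<delta> *\<^sub>R z) = (indicator (cball 0 1) z :: real)" for z :: "real^'n"
      using assms(3) by (simp add: indicator_def dist_norm)
    have e3: "(\<integral>y. indicator (cball x \<delta>) y * (P y)^2 \<partial>lborel) = \<delta> ^ ?p * (\<integral>z. indicator (cball 0 1) z * (P (x + \<delta> *\<^sub>R z))^2 \<partial>lborel)"
      using assms(3) by (subst integral_affine_cart[where c=\<delta> and t=x]) (auto simp: ind)
    have e4: "(\<integral>z. indicator (cball (0::real^'n) 1) z * (P (x + \<delta> *\<^sub>R z))^2 \<partial>lborel) \<ge> 1 / ?g"
      using ball_bound[OF polys_affine[OF P(1), of x \<delta>]] P(2) by simp
    have "\<delta> ^ ?p / (measure lborel S * ?g) = (\<delta> ^ ?p * (1 / ?g)) / measure lborel S" by simp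
    also have "\<dots> \<le> (\<delta> ^ ?p * (\<integral>z. indicator (cball (0::real^'n) 1) z * (P (x + \<delta> *\<^sub>R z))^2 \<partial>lborel)) / measure lborel S"
      using e4 mSpos assms(3) by (intro divide_right_mono mult_left_mono) auto
    also have "\<dots> \<le> (\<integral>y. indicator S y * (P y)^2 \<partial>lborel) / measure lborel S"
      using e2 e3 mSpos by (intro divide_right_mono) auto
    finally show ?thesis using e1 by simp
  qed
  have inf: "\<delta> ^ ?p / (measure lborel S * ?g) \<le> christoffel (uniform_measure lborel S) d x"
    unfolding christoffel_def
  proof (rule cInf_greatest)
    show "{\<integral>y. (P y)^2 \<partial>uniform_measure lborel S |P. P \<in> polys_deg d \<and> P x = 1} \<noteq> {}"
      using one_in_polys[of d, where 'n='n] by auto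
  qed (use key in auto)
  have ginv: "1 / ?g = ?vol / ?B^2"
    unfolding gk_def hc_0 by simp
  have G: "omega ?p * ?R \<le> real (?p + d choose d) * ?vol / ?B^2"
    by (rule Gineq) simp
  have "\<delta> ^ ?p * omega ?p / measure lborel S * ?R = (\<delta> ^ ?p / measure lborel S) * (omega ?p * ?R)"
    by simp
  also have "\<dots> \<le> (\<delta> ^ ?p / measure lborel S) * (real (?p + d choose d) * ?vol / ?B^2)"
    using G mSpos assms(3) by (intro mult_left_mono) auto
  also have "\<dots> = real (?p + d choose d) * ((\<delta> ^ ?p / measure lborel S) * (1 / ?g))"
    unfolding ginv by simp
  also have "\<dots> = real (?p + d choose d) * (\<delta> ^ ?p / (measure lborel S * ?g))"
    by simp
  also have "\<dots> \<le> real (?p + d choose d) * christoffel (uniform_measure lborel S) d x"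
    using inf by (intro mult_left_mono) auto
  finally show ?thesis .
qed

end
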